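(* Let $M\in\mathbb{N}$, $M\ge2$, and let $r$ be a strong solution of the BVP. Then $d(0):=\lim_{R\to0}d(R)=0$, and exactly one of the following occurs: (i) $r$ is a delayed lift-off function, i.e. there exists $0<\delta<1$ with $r\equiv0$ on $[0,\delta]$; in this case $r\in C^\infty([0,1])$; (ii) $r$ lifts off immediately, i.e. $r>0$ and $\dot r>0$ on $(0,1]$; in this case $r\in C^1([0,1])$ and $\dot r(0)=0$.
   Context: Fix constants $\gamma>0$, $s_0\ge0$, $\kappa\ge-\gamma s_0$ and a convex function $\rho\in C^\infty(\mathbb{R})$ with $\rho(s)=0$ for $s\le0$, $\rho(s)=\gamma s+\kappa$ for $s\ge s_0$, and $\rho=\rho_1$ on $[0,s_0]$ where $\rho_1$ is smooth and convex with $\rho_1(0)=0$, $\rho_1(s_0)=\gamma s_0+\kappa$. For $M\in\mathbb{N}\setminus\{0\}$ and a function $r$ on $(0,1]$ let $d(R)=\frac{Mr(R)\dot r(R)}{R}$ and $Lr(R)=\frac{M^2r}{R}-\dot r-R\ddot r$. A strong solution of the BVP is a function $r\in C([0,1])\cap C^\infty((0,1])$ with $Lr=M\rho''(d)\dot d\,r$ on $(0,1)$, $r(0)=0$ and $r(1)=1$. *)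

theory Defs
  imports "HOL-Analysis.Analysis"
begin

definition smooth_on :: "real set \<Rightarrow> (real \<Rightarrow> real) \<Rightarrow> bool" where
  "smooth_on S f \<longleftrightarrow> (\<exists>D :: nat \<Rightarrow> real \<Rightarrow> real.
      (\<forall>x\<in>S. D 0 x = f x) \<and>
      (\<forall>n. \<forall>x\<in>S. (D n has_real_derivative D (Suc n) x) (at x within S)))"

definition C1_zero_at_0 :: "(real \<Rightarrow> real) \<Rightarrow> bool" where
  "C1_zero_at_0 r \<longleftrightarrow> (\<exists>r'. continuous_on {0..1} r' \<and>
      (\<forall>x\<in>{0..1}. (r has_real_derivative r' x) (at x within {0..1})) \<and> r' 0 = 0)"

definition dfun :: "nat \<Rightarrow> (real \<Rightarrow> real) \<Rightarrow> real \<Rightarrow> real" where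
  "dfun M r R = real M * r R * deriv r R / R"

definition Lop :: "nat \<Rightarrow> (real \<Rightarrow> real) \<Rightarrow> real \<Rightarrow> real" where
  "Lop M r R = (real M)^2 * r R / R - deriv r R - R * deriv (deriv r) R"

definition strong_solution :: "(real \<Rightarrow> real) \<Rightarrow> nat \<Rightarrow> (real \<Rightarrow> real) \<Rightarrow> bool" where
  "strong_solution \<rho> M r \<longleftrightarrow>
     continuous_on {0..1} r \<and> smooth_on {0<..1} r \<and>
     (\<forall>R\<in>{0<..<1}. Lop M r R
        = real M * deriv (deriv \<rho>) (dfun M r R) * deriv (dfun M r) R * r R) \<and>
     r 0 = 0 \<and> r 1 = 1"

end

theory Submission
  imports Defs
begin


lemma incr_from_deriv:
  fixes f :: "real \<Rightarrow> real"
  assumes "a \<le> b" "continuous_on {a..b} f"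
    "\<And>x. a < x \<Longrightarrow> x < b \<Longrightarrow> \<exists>l. (f has_real_derivative l) (at x) \<and> l \<ge> 0"
  shows "f a \<le> f b"
proof (cases "a = b")
  case False
  then have "a < b" using assms(1) by simp
  have "\<And>x. a < x \<Longrightarrow> x < b \<Longrightarrow> f differentiable (at x)"
    using assms(3) real_differentiable_def by blast
  then obtain l z where z: "a < z" "z < b" "DERIV f z :> l" "f b - f a = (b - a) * l"
    using MVT[OF \<open>a<b\<close> assms(2)] by blast
  obtain l' where "DERIV f z :> l'" "l' \<ge> 0" using assms(3) z by blast
  then have "l = l'" using z DERIV_unique by blast
  then show ?thesis using z \<open>l' \<ge> 0\<close> \<open>a < b\<close> by (smt (verit) mult_nonneg_nonneg)
qed simp



locale sol =
  fixes \<rho> :: "real \<Rightarrow> real" and M :: nat and r :: "real \<Rightarrow> real"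
    and Dr Dp :: "nat \<Rightarrow> real \<Rightarrow> real"
  assumes M2: "M \<ge> 2"
    and rho0: "\<forall>s\<le>0. \<rho> s = 0"
    and cvx: "convex_on UNIV \<rho>"
    and Dp0: "\<forall>x. Dp 0 x = \<rho> x"
    and DpD: "\<forall>n x. (Dp n has_real_derivative Dp (Suc n) x) (at x)"
    and Dr0: "\<forall>x\<in>{0<..1}. Dr 0 x = r x"
    and DrD: "\<forall>n. \<forall>x\<in>{0<..1}. (Dr n has_real_derivative Dr (Suc n) x) (at x within {0<..1})"
    and rcont: "continuous_on {0..1} r" and r00: "r 0 = 0" and r11: "r 1 = 1"
    and ode: "\<forall>R\<in>{0<..<1}. Lop M r R
        = real M * deriv (deriv \<rho>) (dfun M r R) * deriv (dfun M r) R * r R"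
begin

lemma rho_d: "(\<rho> has_real_derivative Dp 1 x) (at x)"
proof -
  have "(Dp 0 has_real_derivative Dp 1 x) (at x)" using DpD by (metis One_nat_def)
  moreover have "Dp 0 = \<rho>" using Dp0 by auto
  ultimately show ?thesis by simp
qed

lemma rp_d: "(Dp 1 has_real_derivative Dp 2 x) (at x)"
  using DpD by (metis One_nat_def Suc_1)

lemma rpp_d: "(Dp 2 has_real_derivative Dp 3 x) (at x)"
proof -
  have "(Dp 2 has_real_derivative Dp (Suc 2) x) (at x)" using DpD by blast
  moreover have "Suc 2 = (3::nat)" by simp
  ultimately show ?thesis by simp
qed

lemma rp_cont: "isCont (Dp 1) x" using rp_d DERIV_isCont by blast
lemma rpp_cont: "isCont (Dp 2) x" using rpp_d DERIV_isCont by blast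

lemma deriv_rho: "deriv \<rho> = Dp 1" using rho_d DERIV_imp_deriv by blast
lemma deriv2_rho: "deriv (deriv \<rho>) = Dp 2" using rp_d DERIV_imp_deriv deriv_rho by (metis ext)

lemma rp_mono: assumes "x \<le> y" shows "Dp 1 x \<le> Dp 1 y"
proof (cases "x = y")
  case False
  have d1: "(\<rho> has_field_derivative Dp 1 x) (at x within UNIV)" using rho_d by simp
  have d2: "(\<rho> has_field_derivative Dp 1 y) (at y within UNIV)" using rho_d by simp
  have "\<rho> y - \<rho> x \<ge> Dp 1 x * (y - x)"
    by (rule convex_on_imp_above_tangent[OF cvx _ _ _ d1]) auto
  moreover have "\<rho> x - \<rho> y \<ge> Dp 1 y * (x - y)"
    by (rule convex_on_imp_above_tangent[OF cvx _ _ _ d2]) auto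
  ultimately have "(Dp 1 y - Dp 1 x) * (y - x) \<ge> 0" by (simp add: algebra_simps)
  moreover have "y - x > 0" using assms False by simp
  ultimately have "Dp 1 y - Dp 1 x \<ge> 0" by (simp add: zero_le_mult_iff)
  then show ?thesis by simp
qed simp

lemma rpp_nonneg: "Dp 2 x \<ge> 0"
proof (rule ccontr)
  assume "\<not> Dp 2 x \<ge> 0"
  then have "Dp 2 x < 0" by simp
  then obtain e where "e > 0" "\<forall>h>0. h < e \<longrightarrow> Dp 1 x > Dp 1 (x + h)"
    using DERIV_neg_dec_right[OF rp_d] by blast
  then have "Dp 1 x > Dp 1 (x + e/2)" by auto
  moreover have "Dp 1 x \<le> Dp 1 (x + e/2)" using rp_mono \<open>e>0\<close> by simp
  ultimately show False by simp
qed

lemma rp0: "Dp 1 0 = 0"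
proof -
  have "\<not> Dp 1 0 > 0"
  proof
    assume "Dp 1 0 > 0"
    then obtain e where "e > 0" "\<forall>h>0. h < e \<longrightarrow> \<rho> (0 - h) < \<rho> 0"
      using DERIV_pos_inc_left[OF rho_d] by blast
    then have "\<rho> (0 - e/2) < \<rho> 0" by auto
    then show False using rho0 \<open>e>0\<close> by simp
  qed
  moreover have "\<not> Dp 1 0 < 0"
  proof
    assume "Dp 1 0 < 0"
    then obtain e where "e > 0" "\<forall>h>0. h < e \<longrightarrow> \<rho> 0 < \<rho> (0 - h)"
      using DERIV_neg_dec_left[OF rho_d] by blast
    then have "\<rho> 0 < \<rho> (0 - e/2)" by auto
    then show False using rho0 \<open>e>0\<close> by simp
  qed
  ultimately show ?thesis by simp
qed

lemma rp_nonneg: "s \<ge> 0 \<Longrightarrow> Dp 1 s \<ge> 0"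
  using rp_mono[of 0 s] rp0 by simp

end


context sol begin

lemma Dr_within: "x \<in> {0<..1} \<Longrightarrow> (Dr n has_real_derivative Dr (Suc n) x) (at x within {0<..1})"
  using DrD by blast

lemma Dr_at: assumes "x \<in> {0<..<1}" shows "(Dr n has_real_derivative Dr (Suc n) x) (at x)"
proof -
  have "(Dr n has_real_derivative Dr (Suc n) x) (at x within {0<..<1})"
    by (rule DERIV_subset[OF Dr_within[of x n]]) (use assms in auto)
  then show ?thesis using assms at_within_open[of x "{0<..<1}"] by simp
qed

lemma p_at: "x \<in> {0<..<1} \<Longrightarrow> (Dr 1 has_real_derivative Dr 2 x) (at x)"
  using Dr_at[of x 1] by (simp add: numeral_2_eq_2)

lemma r_at: assumes "x \<in> {0<..<1}" shows "(r has_real_derivative Dr 1 x) (at x)"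
proof -
  have "(Dr 0 has_real_derivative Dr 1 x) (at x)" using Dr_at[of x 0] assms by simp
  then show ?thesis
    by (rule has_field_derivative_transform_within_open[of _ _ _ "{0<..<1}"]) (use assms Dr0 in auto)
qed

lemma deriv_r: "x \<in> {0<..<1} \<Longrightarrow> deriv r x = Dr 1 x"
  using r_at DERIV_imp_deriv by blast

lemma deriv2_r: assumes "x \<in> {0<..<1}" shows "deriv (deriv r) x = Dr 2 x"
proof -
  have "(deriv r has_real_derivative Dr 2 x) (at x)"
    by (rule has_field_derivative_transform_within_open[OF p_at[OF assms], of "{0<..<1}"])
       (use assms deriv_r in auto)
  then show ?thesis using DERIV_imp_deriv by blast
qed

definition dd :: "real \<Rightarrow> real" where "dd x = real M * r x * Dr 1 x / x"
definition dd' :: "real \<Rightarrow> real" where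
  "dd' x = real M * (Dr 1 x * Dr 1 x + r x * Dr 2 x) / x - real M * r x * Dr 1 x / x^2"

lemma dfun_eq: "x \<in> {0<..<1} \<Longrightarrow> dfun M r x = dd x"
  by (simp add: dfun_def dd_def deriv_r)

lemma dd_at: assumes "x \<in> {0<..<1}" shows "(dd has_real_derivative dd' x) (at x)"
proof -
  have x0: "x \<noteq> 0" using assms by simp
  have "((\<lambda>x. real M * r x * Dr 1 x / x) has_real_derivative
     ((real M * Dr 1 x * Dr 1 x + Dr 2 x * (real M * r x)) * x - real M * r x * Dr 1 x * 1) / (x * x)) (at x)"
    by (rule DERIV_divide[OF DERIV_mult[OF DERIV_cmult[OF r_at[OF assms]] p_at[OF assms]] DERIV_ident x0])
  moreover have "((real M * Dr 1 x * Dr 1 x + Dr 2 x * (real M * r x)) * x - real M * r x * Dr 1 x * 1) / (x * x) = dd' x"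
    using x0 by (simp add: dd'_def field_simps power2_eq_square)
  ultimately show ?thesis by (simp add: dd_def[abs_def])
qed

lemma deriv_dfun: assumes "x \<in> {0<..<1}" shows "deriv (dfun M r) x = dd' x"
proof -
  have "(dfun M r has_real_derivative dd' x) (at x)"
    by (rule has_field_derivative_transform_within_open[OF dd_at[OF assms], of "{0<..<1}"])
       (use assms dfun_eq in auto)
  then show ?thesis using DERIV_imp_deriv by blast
qed

lemma ode2: assumes "x \<in> {0<..<1}"
  shows "real M ^ 2 * r x / x - Dr 1 x - x * Dr 2 x = real M * Dp 2 (dd x) * dd' x * r x"
  using ode assms by (simp add: Lop_def deriv_r deriv2_r deriv2_rho dfun_eq deriv_dfun)

lemma key_dd: assumes "x \<in> {0<..<1}"
  shows "dd' x * (x^2 / M + M * Dp 2 (dd x) * r x ^ 2) = ((x * Dr 1 x - r x)^2 + (real M ^ 2 - 1) * r x ^ 2) / x"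
proof -
  have x0: "x > 0" using assms by simp
  have M0: "real M > 0" using M2 by simp
  note e1 = ode2[OF assms]
  have a: "dd' x * x^2 / M = x * (Dr 1 x * Dr 1 x + r x * Dr 2 x) - r x * Dr 1 x"
    using x0 M0 by (simp add: dd'_def field_simps power2_eq_square)
  have b: "M * Dp 2 (dd x) * dd' x * r x ^ 2 = r x * (real M ^ 2 * r x / x - Dr 1 x - x * Dr 2 x)"
    using e1 by (simp add: power2_eq_square)
  have "dd' x * (x^2 / M + M * Dp 2 (dd x) * r x ^ 2) = dd' x * x^2 / M + M * Dp 2 (dd x) * dd' x * r x ^ 2"
    by (simp add: algebra_simps)
  also have "\<dots> = x * (Dr 1 x * Dr 1 x + r x * Dr 2 x) - r x * Dr 1 x + r x * (real M ^ 2 * r x / x - Dr 1 x - x * Dr 2 x)"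
    using a b by simp
  also have "\<dots> = ((x * Dr 1 x - r x)^2 + (real M ^ 2 - 1) * r x ^ 2) / x"
    using x0 by (simp add: field_simps power2_eq_square)
  finally show ?thesis .
qed

lemma dd'_nonneg: assumes "x \<in> {0<..<1}" shows "dd' x \<ge> 0"
proof -
  have x0: "x > 0" using assms by simp
  have M0: "real M \<ge> 2" using M2 by simp
  have "real M * real M \<ge> 2 * 2" using M0 by (intro mult_mono) auto
  then have M1: "real M ^ 2 - 1 \<ge> 0" by (simp add: power2_eq_square)
  have "((x * Dr 1 x - r x)^2 + (real M ^ 2 - 1) * r x ^ 2) / x \<ge> 0"
    using x0 M1 by (intro divide_nonneg_pos add_nonneg_nonneg mult_nonneg_nonneg) auto
  moreover have "x^2 / M + M * Dp 2 (dd x) * r x ^ 2 > 0"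
    using x0 M0 rpp_nonneg[of "dd x"] by (intro add_pos_nonneg) auto
  ultimately show ?thesis using key_dd[OF assms] by (metis zero_le_mult_iff not_le)
qed

lemma crit: assumes "x \<in> {0<..<1}" "Dr 1 x = 0"
  shows "Dr 2 x * (x^2 + M^2 * Dp 2 (dd x) * r x ^ 2) = M^2 * r x"
proof -
  have x0: "x > 0" using assms by simp
  have "dd' x = M * r x * Dr 2 x / x" using assms(2) by (simp add: dd'_def)
  then have "real M ^ 2 * r x / x - x * Dr 2 x = real M * Dp 2 (dd x) * (M * r x * Dr 2 x / x) * r x"
    using ode2[OF assms(1)] assms(2) by simp
  then show ?thesis using x0 by (simp add: field_simps power2_eq_square)
qed

end


context sol begin

lemma r_cont_sub: "0 \<le> a \<Longrightarrow> b \<le> 1 \<Longrightarrow> continuous_on {a..b} r"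
  by (rule continuous_on_subset[OF rcont]) auto

lemma Dr_cont: "continuous_on {0<..1} (Dr n)"
  by (rule DERIV_continuous_on[OF Dr_within])

lemma dd_cont: "0 < a \<Longrightarrow> b < 1 \<Longrightarrow> continuous_on {a..b} dd"
  by (intro continuous_at_imp_continuous_on ballI DERIV_isCont[OF dd_at]) auto

lemma dd_mono0: assumes "0 < x" "x \<le> y" "y < 1" shows "dd x \<le> dd y"
proof (rule incr_from_deriv[OF assms(2) dd_cont])
  fix z assume z: "x < z" "z < y"
  then have zI: "z \<in> {0<..<1}" using assms by auto
  show "\<exists>l. (dd has_real_derivative l) (at z) \<and> 0 \<le> l"
    using dd_at[OF zI] dd'_nonneg[OF zI] by blast
qed (use assms in auto)

lemma left_step_neg: assumes m: "m \<in> {0<..<1}" and p0: "Dr 1 m = 0" and q: "Dr 2 m < 0"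
  shows "\<exists>y\<in>{0<..<m}. r y < r m"
proof -
  obtain e where e: "e > 0" "\<forall>h>0. h < e \<longrightarrow> Dr 1 m < Dr 1 (m - h)"
    using DERIV_neg_dec_left[OF p_at[OF m] q] by blast
  define y where "y = m - min e m / 2"
  have y: "0 < y" "y < m" using m e by (auto simp: y_def)
  have c: "continuous_on {y..m} r" using y m by (intro r_cont_sub) auto
  have "\<And>x. y < x \<Longrightarrow> x < m \<Longrightarrow> r differentiable (at x)"
  proof -
    fix x assume "y < x" "x < m"
    then have "x \<in> {0<..<1}" using y m by auto
    then show "r differentiable (at x)" using r_at real_differentiable_def by blast
  qed
  then obtain l z where z: "y < z" "z < m" "DERIV r z :> l" "r m - r y = (m - y) * l"
    using MVT[OF y(2) c] by blast
  have "l = Dr 1 z" using DERIV_unique[OF z(3) r_at] z y m by auto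
  moreover have "Dr 1 z > 0"
  proof -
    have "m - z > 0" "m - z < e" using z y e by (auto simp: y_def)
    then have "Dr 1 m < Dr 1 (m - (m - z))" using e by blast
    then show ?thesis using p0 by simp
  qed
  ultimately have "r m - r y > 0" using z y by simp
  then show ?thesis using y by auto
qed

lemma left_step_pos: assumes m: "m \<in> {0<..<1}" and p0: "Dr 1 m = 0" and q: "Dr 2 m > 0"
  shows "\<exists>y\<in>{0<..<m}. r y > r m"
proof -
  obtain e where e: "e > 0" "\<forall>h>0. h < e \<longrightarrow> Dr 1 (m - h) < Dr 1 m"
    using DERIV_pos_inc_left[OF p_at[OF m] q] by blast
  define y where "y = m - min e m / 2"
  have y: "0 < y" "y < m" using m e by (auto simp: y_def)
  have c: "continuous_on {y..m} r" using y m by (intro r_cont_sub) auto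
  have "\<And>x. y < x \<Longrightarrow> x < m \<Longrightarrow> r differentiable (at x)"
  proof -
    fix x assume "y < x" "x < m"
    then have "x \<in> {0<..<1}" using y m by auto
    then show "r differentiable (at x)" using r_at real_differentiable_def by blast
  qed
  then obtain l z where z: "y < z" "z < m" "DERIV r z :> l" "r m - r y = (m - y) * l"
    using MVT[OF y(2) c] by blast
  have "l = Dr 1 z" using DERIV_unique[OF z(3) r_at] z y m by auto
  moreover have "Dr 1 z < 0"
  proof -
    have "m - z > 0" "m - z < e" using z y e by (auto simp: y_def)
    then have "Dr 1 (m - (m - z)) < Dr 1 m" using e by blast
    then show ?thesis using p0 by simp
  qed
  ultimately have "r m - r y < 0" using z y by (simp add: mult_pos_neg)
  then show ?thesis using y by auto
qed

lemma crit_sign: assumes "x \<in> {0<..<1}" "Dr 1 x = 0"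
  shows "Dr 2 x > 0 \<longleftrightarrow> r x > 0" "Dr 2 x < 0 \<longleftrightarrow> r x < 0"
proof -
  have pos: "x^2 + M^2 * Dp 2 (dd x) * r x ^ 2 > 0"
    using assms rpp_nonneg[of "dd x"] by (intro add_pos_nonneg) auto
  have M0: "real M ^ 2 > 0" using M2 by simp
  have e: "Dr 2 x * (x^2 + M^2 * Dp 2 (dd x) * r x ^ 2) = M^2 * r x" by (rule crit[OF assms])
  have q: "Dr 2 x = M^2 * r x / (x^2 + M^2 * Dp 2 (dd x) * r x ^ 2)"
    using e pos by (simp add: eq_divide_eq)
  have M1: "real (M^2) > 0" using M2 by simp
  show "Dr 2 x > 0 \<longleftrightarrow> r x > 0"
    unfolding q using pos M1 by (simp add: zero_less_divide_iff zero_less_mult_iff)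
  show "Dr 2 x < 0 \<longleftrightarrow> r x < 0"
    unfolding q using pos M1 by (simp add: divide_less_0_iff mult_less_0_iff)
qed


lemma r_nonneg: "x \<in> {0..1} \<Longrightarrow> r x \<ge> 0"
proof (rule ccontr)
  assume x: "x \<in> {0..1}" "\<not> r x \<ge> 0"
  obtain m where m: "m \<in> {0..1}" "\<forall>y\<in>{0..1}. r m \<le> r y"
    using continuous_attains_inf[OF compact_Icc _ rcont] by auto
  have "r m \<le> r x" using m x by blast
  then have rm: "r m < 0" using x by simp
  have mI: "m \<in> {0<..<1}" using m rm r00 r11
    by (metis atLeastAtMost_iff greaterThanLessThan_iff less_eq_real_def not_less_iff_gr_or_eq zero_less_one)
  have "\<forall>y. \<bar>m - y\<bar> < min m (1 - m) \<longrightarrow> r m \<le> r y"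
  proof (intro allI impI)
    fix y assume "\<bar>m - y\<bar> < min m (1 - m)"
    then have "y \<in> {0..1}" by auto
    then show "r m \<le> r y" using m by blast
  qed
  then have p0: "Dr 1 m = 0"
    using DERIV_local_min[OF r_at[OF mI], of "min m (1 - m)"] mI by simp
  have "Dr 2 m < 0" using crit_sign(2)[OF mI p0] rm by simp
  then obtain y where y: "y \<in> {0<..<m}" "r y < r m" using left_step_neg[OF mI p0] by blast
  then have "y \<in> {0..1}" using mI by auto
  then have "r m \<le> r y" using m by blast
  then show False using y by simp
qed

lemma r_zero_delayed: assumes R1: "R1 \<in> {0<..<1}" "r R1 = 0"
  shows "\<forall>x\<in>{0..R1}. r x = 0"
proof
  fix x assume x: "x \<in> {0..R1}"
  have "\<forall>y. \<bar>R1 - y\<bar> < min R1 (1 - R1) \<longrightarrow> r R1 \<le> r y"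
  proof (intro allI impI)
    fix y assume "\<bar>R1 - y\<bar> < min R1 (1 - R1)"
    then have "y \<in> {0..1}" by auto
    then show "r R1 \<le> r y" using r_nonneg R1 by auto
  qed
  then have p0: "Dr 1 R1 = 0"
    using DERIV_local_min[OF r_at[OF R1(1)], of "min R1 (1 - R1)"] R1 by simp
  have dR1: "dd R1 = 0" using R1 by (simp add: dd_def)
  have neg: "r y * Dr 1 y \<le> 0" if y: "0 < y" "y < R1" for y
  proof -
    have "dd y \<le> 0" using dd_mono0[of y R1] y R1 dR1 by auto
    then have "real M * r y * Dr 1 y / y \<le> 0" by (simp add: dd_def)
    moreover have "real M > 0" using M2 by simp
    ultimately show ?thesis using y
      by (smt (verit, ccfv_SIG) divide_pos_pos mult_pos_pos mult.assoc)
  qed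
  have "- (r 0 * r 0) \<le> - (r x * r x)"
  proof (rule incr_from_deriv[where f="\<lambda>y. - (r y * r y)"])
    show "0 \<le> x" using x by simp
    show "continuous_on {0..x} (\<lambda>y. - (r y * r y))"
      using x R1 by (intro continuous_intros r_cont_sub) auto
    fix y assume y: "0 < y" "y < x"
    have yI: "y \<in> {0<..<1}" using y x R1 by auto
    show "\<exists>l. ((\<lambda>y. - (r y * r y)) has_real_derivative l) (at y) \<and> 0 \<le> l"
      using DERIV_minus[OF DERIV_mult[OF r_at[OF yI] r_at[OF yI]]] neg[of y] y x
      by (intro exI[of _ "- (Dr 1 y * r y + Dr 1 y * r y)"]) (auto simp: algebra_simps)
  qed
  then have "r x * r x \<le> 0" using r00 by simp
  then have "r x * r x = 0" using zero_le_square[of "r x"] by linarith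
  then show "r x = 0" by simp
qed

end

locale sol2 = sol +
  assumes rpos: "\<forall>x\<in>{0<..1}. r x > 0"
begin

lemma p_ne0: assumes xI: "x \<in> {0<..<1}" shows "Dr 1 x \<noteq> 0"
proof
  assume p0: "Dr 1 x = 0"
  have "Dr 2 x > 0" using crit_sign(1)[OF xI p0] rpos xI by auto
  then obtain y where y: "y \<in> {0<..<x}" "r y > r x" using left_step_pos[OF xI p0] by blast
  obtain m where m: "m \<in> {0..x}" "\<forall>y\<in>{0..x}. r y \<le> r m"
    using continuous_attains_sup[OF compact_Icc _ r_cont_sub[of 0 x]] xI by auto
  have "r m \<ge> r y" using m y by auto
  moreover have "r x > 0" using rpos xI by auto
  ultimately have rm: "r m > r x" "r m > 0" using y by auto
  have mI: "m \<in> {0<..<x}" using m rm r00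
    by (metis atLeastAtMost_iff greaterThanLessThan_iff less_eq_real_def less_irrefl)
  then have mI': "m \<in> {0<..<1}" using xI by auto
  have "\<forall>y. \<bar>m - y\<bar> < min m (x - m) \<longrightarrow> r y \<le> r m"
  proof (intro allI impI)
    fix y assume "\<bar>m - y\<bar> < min m (x - m)"
    then have "y \<in> {0..x}" by auto
    then show "r y \<le> r m" using m by blast
  qed
  then have pm: "Dr 1 m = 0"
    using DERIV_local_max[OF r_at[OF mI'], of "min m (x - m)"] mI by simp
  have "Dr 2 m > 0" using crit_sign(1)[OF mI' pm] rm by simp
  then obtain y' where y': "y' \<in> {0<..<m}" "r y' > r m" using left_step_pos[OF mI' pm] by blast
  then have "y' \<in> {0..x}" using mI by auto
  then have "r y' \<le> r m" using m by blast
  then show False using y' by simp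
qed

lemma p_pos: assumes xI: "x \<in> {0<..<1}" shows "Dr 1 x > 0"
proof -
  have "\<And>x. 0 < x \<Longrightarrow> x < 1 \<Longrightarrow> r differentiable (at x)"
    using r_at real_differentiable_def greaterThanLessThan_iff by blast
  then obtain l z where z: "0 < z" "z < 1" "DERIV r z :> l" "r 1 - r 0 = (1 - 0) * l"
    using MVT[OF zero_less_one rcont] by blast
  have "l = Dr 1 z" using DERIV_unique[OF z(3) r_at] z by auto
  then have pz: "Dr 1 z > 0" using z r00 r11 by simp
  show ?thesis
  proof (rule ccontr)
    assume "\<not> Dr 1 x > 0"
    then have px: "Dr 1 x < 0" using p_ne0[OF xI] by simp
    have cI: "continuous_on {min x z..max x z} (Dr 1)"
      by (rule continuous_on_subset[OF Dr_cont]) (use xI z in auto)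
    have "\<exists>w. min x z \<le> w \<and> w \<le> max x z \<and> Dr 1 w = 0"
    proof (cases "x \<le> z")
      case True
      then show ?thesis using IVT'[of "Dr 1" x 0 z] px pz cI by (simp add: min_def max_def)
    next
      case False
      then have zx: "z \<le> x" by simp
      have "continuous_on {z..x} (Dr 1)"
        by (rule continuous_on_subset[OF Dr_cont]) (use xI z in auto)
      then obtain w where "z \<le> w" "w \<le> x" "Dr 1 w = 0"
        using IVT2'[of "Dr 1" x 0 z, OF less_imp_le[OF px] less_imp_le[OF pz] zx] by blast
      then show ?thesis using zx by (intro exI[of _ w]) (simp add: min_def max_def)
    qed
    then obtain w where "min x z \<le> w" "w \<le> max x z" "Dr 1 w = 0" by blast
    moreover have "w \<in> {0<..<1}" using calculation xI z by auto
    ultimately show False using p_ne0 by blast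
  qed
qed

lemma dd_pos: "x \<in> {0<..<1} \<Longrightarrow> dd x > 0"
  using rpos p_pos M2 by (simp add: dd_def)

lemma p1_pos: "Dr 1 1 > 0"
proof -
  define ddc where "ddc x = real M * Dr 0 x * Dr 1 x / x" for x
  have "continuous_on {0<..1} ddc" unfolding ddc_def
    by (intro continuous_intros Dr_cont) auto
  then have c: "continuous_on (closure {1/2..<1}) ddc"
    by (rule continuous_on_subset) auto
  have "ddc 1 \<ge> dd (1/2)"
  proof (rule continuous_ge_on_closure[OF c])
    show "1 \<in> closure {1/2..<(1::real)}" by simp
    fix x :: real assume x: "x \<in> {1/2..<1}"
    then have "ddc x = dd x" using Dr0 by (simp add: ddc_def dd_def)
    then show "dd (1/2) \<le> ddc x" using dd_mono0[of "1/2" x] x by auto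
  qed
  moreover have "dd (1/2) > 0" using dd_pos by simp
  ultimately have "ddc 1 > 0" by simp
  then show ?thesis using Dr0 r11 M2 by (simp add: ddc_def zero_less_mult_iff)
qed

end


context sol2 begin

lemma dd_mono: "0 < x \<Longrightarrow> x \<le> y \<Longrightarrow> y < 1 \<Longrightarrow> dd x \<le> dd y" by (rule dd_mono0)

lemma rp_eq: "x \<in> {0<..<1} \<Longrightarrow> r x * Dr 1 x = x * dd x / M"
  using M2 by (simp add: dd_def)

lemma sq_deriv: assumes yI: "y \<in> {0<..<1}"
  shows "((\<lambda>y. a * y * y / M - r y * r y) has_real_derivative 2 * y * (a - dd y) / M) (at y)"
proof -
  have "((\<lambda>y. a * y * y / M - r y * r y) has_real_derivative
      (a * y + a * y) / M - (Dr 1 y * r y + Dr 1 y * r y)) (at y)"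
    using M2 by (auto intro!: derivative_eq_intros r_at[OF yI] simp: algebra_simps)
  moreover have "(a * y + a * y) / M - (Dr 1 y * r y + Dr 1 y * r y) = 2 * y * (a - dd y) / M"
    using rp_eq[OF yI] M2 by (simp add: field_simps)
  ultimately show ?thesis by simp
qed

lemma r_sq_upper: assumes x0: "x0 \<in> {0<..<1}" and x: "0 < x" "x \<le> x0"
  shows "r x * r x \<le> dd x0 * x * x / M"
proof -
  have "dd x0 * 0 * 0 / M - r 0 * r 0 \<le> dd x0 * x * x / M - r x * r x"
  proof (rule incr_from_deriv[where f="\<lambda>y. dd x0 * y * y / M - r y * r y"])
    show "0 \<le> x" using x by simp
    show "continuous_on {0..x} (\<lambda>y. dd x0 * y * y / M - r y * r y)"
      using x x0 M2 by (intro continuous_intros r_cont_sub) auto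
    fix y assume y: "0 < y" "y < x"
    then have yI: "y \<in> {0<..<1}" using x x0 by auto
    have "dd y \<le> dd x0" using dd_mono[of y x0] y x x0 by auto
    then have "2 * y * (dd x0 - dd y) / M \<ge> 0" using y by simp
    then show "\<exists>l. ((\<lambda>y. dd x0 * y * y / M - r y * r y) has_real_derivative l) (at y) \<and> 0 \<le> l"
      using sq_deriv[OF yI] by blast
  qed
  then show ?thesis using r00 by simp
qed

lemma r_sq_lower: assumes e: "\<forall>y\<in>{0<..<1}. e \<le> dd y" and x: "0 < x" "x < 1"
  shows "e * x * x / M \<le> r x * r x"
proof -
  have "- (e * 0 * 0 / M - r 0 * r 0) \<le> - (e * x * x / M - r x * r x)"
  proof (rule incr_from_deriv[where f="\<lambda>y. - (e * y * y / M - r y * r y)"])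
    show "0 \<le> x" using x by simp
    show "continuous_on {0..x} (\<lambda>y. - (e * y * y / M - r y * r y))"
      using x M2 by (intro continuous_intros r_cont_sub) auto
    fix y assume y: "0 < y" "y < x"
    then have yI: "y \<in> {0<..<1}" using x by auto
    have "e \<le> dd y" using e yI by blast
    then have "2 * y * (dd y - e) / M \<ge> 0" using y M2 by (simp add: divide_nonneg_pos mult_nonneg_nonneg)
    moreover have "- (2 * y * (e - dd y) / M) = 2 * y * (dd y - e) / M" using M2 by (simp add: field_simps)
    ultimately have "- (2 * y * (e - dd y) / M) \<ge> 0" by simp
    then show "\<exists>l. ((\<lambda>y. - (e * y * y / M - r y * r y)) has_real_derivative l) (at y) \<and> 0 \<le> l"
      using DERIV_minus[OF sq_deriv[OF yI]] by blast
  qed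
  then show ?thesis using r00 by simp
qed

lemma ln_deriv_mono: assumes "0 < a" "a \<le> b" "b < 1" "A \<ge> 0"
  and "\<And>y. a < y \<Longrightarrow> y < b \<Longrightarrow> (f has_real_derivative f' y) (at y)"
  and "\<And>y. a < y \<Longrightarrow> y < b \<Longrightarrow> f' y \<ge> A / y"
  and "continuous_on {a..b} f"
  shows "f a - A * ln a \<le> f b - A * ln b"
proof (rule incr_from_deriv[where f="\<lambda>y. f y - A * ln y"])
  show "continuous_on {a..b} (\<lambda>y. f y - A * ln y)"
    using assms by (intro continuous_intros) auto
  fix y assume y: "a < y" "y < b"
  have "((\<lambda>y. f y - A * ln y) has_real_derivative f' y - A * (1 / y)) (at y)"
    using y assms by (auto intro!: derivative_eq_intros)
  moreover have "f' y - A * (1 / y) \<ge> 0" using assms(6)[OF y] by simp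
  ultimately show "\<exists>l. ((\<lambda>y. f y - A * ln y) has_real_derivative l) (at y) \<and> 0 \<le> l" by blast
qed (use assms in auto)

lemma dd_inf: assumes "e > 0" shows "\<exists>x\<in>{0<..<1}. dd x < e"
proof (rule ccontr)
  assume "\<not> ?thesis"
  then have e: "\<forall>y\<in>{0<..<1}. e \<le> dd y" by auto
  define D where "D = dd (1/2)"
  have D: "D \<ge> e" using e by (simp add: D_def)
  obtain k where k: "k \<in> {0..D}" "\<forall>s\<in>{0..D}. Dp 2 s \<le> Dp 2 k"
    using continuous_attains_sup[OF compact_Icc _ continuous_at_imp_continuous_on[of "{0..D}" "Dp 2"]]
      rpp_cont D \<open>e>0\<close> by auto
  define Kc where "Kc = Dp 2 k"
  have Kc: "Kc \<ge> 0" using rpp_nonneg by (simp add: Kc_def)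
  have M0: "real M \<ge> 2" using M2 by simp
  define W where "W = 1 / M + Kc * D"
  have W: "W > 0" using Kc D \<open>e>0\<close> M0 unfolding W_def by (intro add_pos_nonneg) auto
  have Mm: "real M * real M \<ge> 2 * 2" using M0 by (intro mult_mono) auto
  define A where "A = (real M ^ 2 - 1) * e / (M * W)"
  have A: "A > 0" unfolding A_def using W M0 Mm \<open>e>0\<close> by (intro divide_pos_pos mult_pos_pos) (auto simp: power2_eq_square)
  have dd'b: "dd' y \<ge> A / y" if y: "0 < y" "y < 1/2" for y
  proof -
    have yI: "y \<in> {0<..<1}" using y by auto
    define c where "c = Dp 2 (dd y)"
    have ddy: "e \<le> dd y" "dd y \<le> D" using e yI dd_mono[of y "1/2"] y by (auto simp: D_def)
    have c: "0 \<le> c" "c \<le> Kc" using k ddy D \<open>e>0\<close> rpp_nonneg by (auto simp: c_def Kc_def)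
    have ru: "r y * r y \<le> D * y * y / M" using r_sq_upper[of "1/2" y] y by (simp add: D_def)
    have rl: "e * y * y / M \<le> r y * r y" using r_sq_lower[OF e] y by simp
    define den where "den = y^2 / M + M * c * r y ^ 2"
    have den_pos: "den > 0" using y c M0 unfolding den_def by (intro add_pos_nonneg) auto
    have cr: "c * (r y * r y) \<le> Kc * (D * y * y / M)" using c ru Kc by (intro mult_mono) auto
    have "M * c * r y ^ 2 \<le> M * Kc * (D * y * y / M)"
      using mult_left_mono[OF cr, of "real M"] M0 by (simp add: power2_eq_square mult.assoc)
    also have "\<dots> = Kc * D * y^2" using M0 by (simp add: power2_eq_square)
    finally have den_le: "den \<le> y^2 * W" unfolding den_def W_def by (simp add: algebra_simps)
    have "((y * Dr 1 y - r y)^2 + (real M ^ 2 - 1) * r y ^ 2) / y \<ge> (real M ^ 2 - 1) * r y ^ 2 / y"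
      using y by (intro divide_right_mono) auto
    moreover have "(real M ^ 2 - 1) * r y ^ 2 / y \<ge> (real M ^ 2 - 1) * (e * y * y / M) / y"
      using rl y Mm by (intro divide_right_mono mult_left_mono) (auto simp: power2_eq_square)
    moreover have "(real M ^ 2 - 1) * (e * y * y / M) / y = (real M ^ 2 - 1) * e * y / M"
      using y M0 by (simp add: field_simps)
    ultimately have "dd' y * den \<ge> (real M ^ 2 - 1) * e * y / M"
      using key_dd[OF yI] by (simp add: den_def c_def)
    moreover have "dd' y * den \<le> dd' y * (y^2 * W)"
      using mult_left_mono[OF den_le dd'_nonneg[OF yI]] .
    ultimately have "(real M ^ 2 - 1) * e * y / M \<le> dd' y * (y^2 * W)" by linarith
    moreover have "(real M ^ 2 - 1) * e * y / M = y * ((real M ^ 2 - 1) * e / M)" by simp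
    moreover have "dd' y * (y^2 * W) = y * (dd' y * y * W)" by (simp add: power2_eq_square)
    ultimately have h2: "(real M ^ 2 - 1) * e / M \<le> dd' y * y * W"
      using y by (metis mult_left_le_imp_le)
    have "A / y = ((real M ^ 2 - 1) * e / M) / (y * W)" unfolding A_def using y W M0 by (simp add: field_simps)
    also have "\<dots> \<le> (dd' y * y * W) / (y * W)" using h2 y W by (intro divide_right_mono) auto
    also have "\<dots> = dd' y" using y W by simp
    finally have "A / y \<le> dd' y" .
    then show ?thesis .
  qed
  define eps where "eps = min (1/4) (exp ((A * ln (1/2) - D) / A - 1))"
  have eps: "0 < eps" "eps < 1/2" by (auto simp: eps_def)
  have mon: "dd eps - A * ln eps \<le> dd (1/2) - A * ln (1/2)"
  proof (rule ln_deriv_mono[where f' = dd'])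
    show "continuous_on {eps..1/2} dd" using eps by (intro dd_cont) auto
  qed (use eps A dd_at dd'b in auto)
  moreover have "ln eps \<le> (A * ln (1/2) - D) / A - 1"
  proof -
    have "eps \<le> exp ((A * ln (1/2) - D) / A - 1)" by (simp add: eps_def)
    then have "ln eps \<le> ln (exp ((A * ln (1/2) - D) / A - 1))" using eps by (subst ln_le_cancel_iff) auto
    then show ?thesis by simp
  qed
  then have "A * ln eps \<le> A * ((A * ln (1/2) - D) / A - 1)" using A by (simp add: mult_left_mono)
  moreover have "A * ((A * ln (1/2) - D) / A) = A * ln (1/2) - D" using A by simp
  ultimately have "A * ln eps \<le> A * ln (1/2) - D - A" by (simp add: right_diff_distrib)
  moreover have "dd eps \<ge> e" using e eps by auto
  ultimately show False using A \<open>e > 0\<close> mon by (simp add: D_def)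
qed

lemma dd_lim: "(dd \<longlongrightarrow> 0) (at_right 0)"
proof (rule tendstoI)
  fix e :: real assume "e > 0"
  then obtain x0 where x0: "x0 \<in> {0<..<1}" "dd x0 < e" using dd_inf by blast
  have "\<forall>y>0. y < x0 \<longrightarrow> dist (dd y) 0 < e"
  proof (intro allI impI)
    fix y :: real assume "y > 0" "y < x0"
    then have "0 < dd y" "dd y \<le> dd x0" using dd_pos dd_mono x0 by auto
    then show "dist (dd y) 0 < e" using x0 by simp
  qed
  then show "\<forall>\<^sub>F x in at_right 0. dist (dd x) 0 < e"
    unfolding eventually_at_right_field using x0 by auto
qed

lemma ev_I: "eventually (\<lambda>x. x \<in> {0<..<1}) (at_right (0::real))"
  unfolding eventually_at_right_field by (intro exI[of _ 1]) auto

lemma dfun_lim: "(dfun M r \<longlongrightarrow> 0) (at_right 0)"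
proof -
  have "eventually (\<lambda>x. dd x = dfun M r x) (at_right 0)"
    using ev_I by eventually_elim (simp add: dfun_eq)
  then show ?thesis using dd_lim tendsto_cong by blast
qed

end


context sol2 begin

lemma S_lim: "((\<lambda>x. sqrt (dd x / M)) \<longlongrightarrow> 0) (at_right 0)"
  using tendsto_real_sqrt[OF tendsto_divide[OF dd_lim tendsto_const[of "real M"]]] M2 by simp

lemma r_over: assumes xI: "x \<in> {0<..<1}" shows "r x / x \<le> sqrt (dd x / M)" "0 < r x / x"
proof -
  have h: "r x * r x \<le> dd x * x * x / M" using r_sq_upper[OF xI, of x] xI by auto
  have "(r x / x)^2 = r x * r x / (x * x)" by (simp add: power2_eq_square)
  also have "\<dots> \<le> (dd x * x * x / M) / (x * x)" using h xI by (intro divide_right_mono) auto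
  also have "\<dots> = dd x / M" using xI by (simp add: field_simps)
  finally show "r x / x \<le> sqrt (dd x / M)" by (rule real_le_rsqrt)
  show "0 < r x / x" using rpos xI by simp
qed

lemma r_over_le: assumes R0: "R0 \<in> {0<..<1}" and y: "0 < y" "y \<le> R0"
  shows "r y / y \<le> sqrt (dd R0 / M)"
proof -
  have h: "r y * r y \<le> dd R0 * y * y / M" using r_sq_upper[OF R0 y] .
  have "(r y / y)^2 = r y * r y / (y * y)" by (simp add: power2_eq_square)
  also have "\<dots> \<le> (dd R0 * y * y / M) / (y * y)" using h y by (intro divide_right_mono) auto
  also have "\<dots> = dd R0 / M" using y by (simp add: field_simps)
  finally show ?thesis by (rule real_le_rsqrt)
qed

lemma p_bound: assumes R0: "R0 \<in> {0<..<1}"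
  shows "Dr 1 R0 \<le> real M ^ 2 * sqrt (dd R0 / M)"
proof -
  define f where "f y = Dp 1 (dd y)" for y
  define Sv where "Sv = sqrt (dd R0 / M)"
  define B where "B = real M ^ 2 * Sv"
  define A where "A = M * f R0"
  define Kf where "Kf y = y * Dr 1 y + M * r y * f y - A * r y - B * y" for y
  have Sv: "Sv \<ge> 0" using dd_pos[OF R0] by (simp add: Sv_def)
  have B: "B \<ge> 0" using Sv by (simp add: B_def)
  have Kd: "(Kf has_real_derivative
      (Dr 1 y + Dr 2 y * y + (real M * Dr 1 y * f y + Dp 2 (dd y) * dd' y * (real M * r y)) - A * Dr 1 y - B)) (at y)"
    if yI: "y \<in> {0<..<1}" for y
  proof -
    have fd: "(f has_real_derivative Dp 2 (dd y) * dd' y) (at y)"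
      unfolding f_def[abs_def] by (rule DERIV_chain2[OF rp_d dd_at[OF yI]])
    have "((\<lambda>y. y * Dr 1 y + M * r y * f y - A * r y - B * y) has_real_derivative
      (1 * Dr 1 y + Dr 2 y * y + (real M * Dr 1 y * f y + Dp 2 (dd y) * dd' y * (real M * r y)) - A * Dr 1 y - B * 1)) (at y)"
      by (intro DERIV_diff DERIV_add DERIV_mult DERIV_cmult DERIV_ident fd r_at[OF yI] p_at[OF yI])
    then show ?thesis unfolding Kf_def[abs_def] by simp
  qed
  have Kd_eq: "Dr 1 y + Dr 2 y * y + (real M * Dr 1 y * f y + Dp 2 (dd y) * dd' y * (real M * r y)) - A * Dr 1 y - B
      = real M ^ 2 * r y / y + real M * Dr 1 y * f y - A * Dr 1 y - B" if yI: "y \<in> {0<..<1}" for y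
    using ode2[OF yI] by (simp add: algebra_simps)
  have Kd_neg: "real M ^ 2 * r y / y + real M * Dr 1 y * f y - A * Dr 1 y - B \<le> 0"
    if y: "0 < y" "y < R0" for y
  proof -
    have yI: "y \<in> {0<..<1}" using y R0 by auto
    have "r y / y \<le> Sv" unfolding Sv_def using r_over_le[OF R0, of y] y by simp
    then have a: "real M ^ 2 * (r y / y) \<le> B" unfolding B_def using mult_left_mono[of "r y / y" Sv "real M ^ 2"] by simp
    have "f y \<le> f R0" unfolding f_def using dd_mono[of y R0] y R0 rp_mono by auto
    then have "real M * Dr 1 y * f y \<le> real M * Dr 1 y * f R0"
      using p_pos[OF yI] by (simp add: mult_left_mono)
    then have b: "real M * Dr 1 y * f y \<le> A * Dr 1 y" unfolding A_def by (simp add: algebra_simps)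
    show ?thesis using a b by simp
  qed
  have Kcont: "continuous_on {a..b} Kf" if "0 < a" "b < 1" for a b
  proof (intro continuous_at_imp_continuous_on ballI)
    fix x assume "x \<in> {a..b}"
    then have "x \<in> {0<..<1}" using that by auto
    then show "isCont Kf x" using Kd DERIV_isCont by blast
  qed
  have KR0: "Kf R0 \<le> 0"
  proof (rule ccontr)
    assume "\<not> Kf R0 \<le> 0"
    then have k: "Kf R0 > 0" by simp
    define k where "k = Kf R0"
    have yp: "y * Dr 1 y \<ge> k" if y: "0 < y" "y \<le> R0" for y
    proof -
      have "- Kf y \<le> - Kf R0"
      proof (rule incr_from_deriv[where f="\<lambda>y. - Kf y"])
        show "continuous_on {y..R0} (\<lambda>y. - Kf y)" using y R0 Kcont by (intro continuous_intros) auto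
        fix z assume z: "y < z" "z < R0"
        then have zI: "z \<in> {0<..<1}" using y R0 by auto
        show "\<exists>l. ((\<lambda>y. - Kf y) has_real_derivative l) (at z) \<and> 0 \<le> l"
          using DERIV_minus[OF Kd[OF zI]] Kd_eq[OF zI] Kd_neg[of z] z y by auto
      qed (use y in auto)
      then have Ky: "Kf y \<ge> k" by (simp add: k_def)
      have yI: "y \<in> {0<..1}" using y R0 by auto
      have "f y \<le> f R0" unfolding f_def using dd_mono[of y R0] y R0 rp_mono by auto
      moreover have "real M * r y \<ge> 0" using rpos yI by (simp add: less_imp_le)
      ultimately have "real M * r y * f y \<le> real M * r y * f R0" by (rule mult_left_mono)
      then have "real M * r y * f y \<le> A * r y" by (simp add: A_def algebra_simps)
      moreover have "B * y \<ge> 0" using B y by simp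
      ultimately show ?thesis using Ky unfolding Kf_def by linarith
    qed
    define eps where "eps = min (R0/2) (exp ((k * ln R0 - r R0) / k - 1))"
    have eps: "0 < eps" "eps < R0" using R0 by (auto simp: eps_def)
    have mon: "r eps - k * ln eps \<le> r R0 - k * ln R0"
    proof (rule ln_deriv_mono[where f' = "Dr 1"])
      show "continuous_on {eps..R0} r" using eps R0 by (intro r_cont_sub) auto
      fix y assume y: "eps < y" "y < R0"
      then have "y * Dr 1 y \<ge> k" using yp eps by auto
      then show "k / y \<le> Dr 1 y" using y eps by (simp add: pos_divide_le_eq mult.commute)
    qed (use eps R0 k r_at k_def in auto)
    have "ln eps \<le> (k * ln R0 - r R0) / k - 1"
    proof -
      have "eps \<le> exp ((k * ln R0 - r R0) / k - 1)" by (simp add: eps_def)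
      then have "ln eps \<le> ln (exp ((k * ln R0 - r R0) / k - 1))" using eps by (subst ln_le_cancel_iff) auto
      then show ?thesis by simp
    qed
    then have "k * ln eps \<le> k * ((k * ln R0 - r R0) / k - 1)" using k k_def by (simp add: mult_left_mono)
    moreover have "k * ((k * ln R0 - r R0) / k) = k * ln R0 - r R0" using k k_def by simp
    ultimately have "k * ln eps \<le> k * ln R0 - r R0 - k" by (simp add: right_diff_distrib)
    moreover have "r eps > 0" using rpos eps R0 by auto
    ultimately show False using mon k k_def by linarith
  qed
  then have "R0 * Dr 1 R0 - B * R0 \<le> 0" unfolding Kf_def A_def by (simp add: algebra_simps)
  then have "R0 * Dr 1 R0 \<le> R0 * B" by (simp add: algebra_simps)
  then have "Dr 1 R0 \<le> B" using R0 by simp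
  then show ?thesis by (simp add: B_def Sv_def)
qed

lemma p_lim: "(Dr 1 \<longlongrightarrow> 0) (at_right 0)"
proof (rule tendsto_sandwich[of "\<lambda>_. 0" _ _ "\<lambda>x. real M ^ 2 * sqrt (dd x / M)"])
  show "\<forall>\<^sub>F n in at_right 0. 0 \<le> Dr 1 n"
    using ev_I by eventually_elim (rule less_imp_le[OF p_pos])
  show "\<forall>\<^sub>F n in at_right 0. Dr 1 n \<le> real M ^ 2 * sqrt (dd n / real M)"
    using ev_I by eventually_elim (use p_bound in auto)
  show "((\<lambda>x. real M ^ 2 * sqrt (dd x / real M)) \<longlongrightarrow> 0) (at_right 0)"
    using tendsto_mult[OF tendsto_const S_lim, of "real M ^ 2"] by simp
qed simp

lemma rq_lim: "((\<lambda>x. r x / x) \<longlongrightarrow> 0) (at_right 0)"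
proof (rule tendsto_sandwich[of "\<lambda>_. 0" _ _ "\<lambda>x. sqrt (dd x / M)"])
  show "\<forall>\<^sub>F n in at_right 0. 0 \<le> r n / n"
    using ev_I by eventually_elim (use r_over in force)
  show "\<forall>\<^sub>F n in at_right 0. r n / n \<le> sqrt (dd n / real M)"
    using ev_I by eventually_elim (use r_over in auto)
qed (use S_lim in auto)

lemma at_within_01: assumes "x \<in> {0<..1}" shows "at x within {0..1} = at x within {0<..(1::real)}"
  by (rule at_within_nhd[of x "{0<..<2}"]) (use assms in auto)

lemma at0_within: "at (0::real) within {0..1} = at 0 within {0<..<1}"
  by (rule at_within_nhd[of 0 "{-1<..<1}"]) auto

lemma r_deriv_within: assumes x: "x \<in> {0<..1}"
  shows "(r has_real_derivative Dr 1 x) (at x within {0..1})"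
proof -
  have "(Dr 0 has_real_derivative Dr (Suc 0) x) (at x within {0<..1})" using Dr_within[OF x] .
  then have "(r has_real_derivative Dr (Suc 0) x) (at x within {0<..1})"
    by (rule has_field_derivative_transform_within[where d=1]) (use x Dr0 in auto)
  then show ?thesis using at_within_01[OF x] by simp
qed

lemma caseii: "\<forall>R\<in>{0<..1}. r R > 0 \<and> (\<exists>D>0. (r has_real_derivative D) (at R within {0..1}))"
proof
  fix R :: real assume R: "R \<in> {0<..1}"
  have "Dr 1 R > 0"
  proof (cases "R = 1")
    case True then show ?thesis using p1_pos by simp
  next
    case False then show ?thesis using p_pos R by auto
  qed
  then show "r R > 0 \<and> (\<exists>D>0. (r has_real_derivative D) (at R within {0..1}))"
    using rpos R r_deriv_within[OF R] by blast
qed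

lemma C1: "C1_zero_at_0 r"
proof -
  define r' where "r' x = (if x = 0 then 0 else Dr 1 x)" for x :: real
  have lim0: "(r' \<longlongrightarrow> 0) (at 0 within {0..1})"
  proof -
    have "eventually (\<lambda>x. Dr 1 x = r' x) (at_right 0)"
      unfolding eventually_at_filter by (simp add: r'_def)
    then have "(r' \<longlongrightarrow> 0) (at_right 0)" using p_lim tendsto_cong by blast
    then have "(r' \<longlongrightarrow> 0) (at 0 within {0<..<1})" by (rule tendsto_within_subset) auto
    then show ?thesis by (simp add: at0_within)
  qed
  have c1: "continuous_on {0..1} r'"
    unfolding continuous_on_eq_continuous_within
  proof
    fix x :: real assume x: "x \<in> {0..1}"
    show "continuous (at x within {0..1}) r'"
    proof (cases "x = 0")
      case True
      then show ?thesis using lim0 by (simp add: continuous_within r'_def)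
    next
      case False
      then have xI: "x \<in> {0<..1}" using x by auto
      have "continuous (at x within {0<..1}) (Dr 1)"
        using Dr_cont xI continuous_on_eq_continuous_within by blast
      then have "(Dr 1 \<longlongrightarrow> r' x) (at x within {0<..1})"
        using False by (simp add: continuous_within r'_def)
      moreover have "eventually (\<lambda>y. Dr 1 y = r' y) (at x within {0<..1})"
        unfolding eventually_at_filter by (simp add: r'_def)
      ultimately have "(r' \<longlongrightarrow> r' x) (at x within {0<..1})" using tendsto_cong by blast
      then show ?thesis by (simp add: continuous_within at_within_01[OF xI])
    qed
  qed
  have d1: "\<forall>x\<in>{0..1}. (r has_real_derivative r' x) (at x within {0..1})"
  proof
    fix x :: real assume x: "x \<in> {0..1}"
    show "(r has_real_derivative r' x) (at x within {0..1})"
    proof (cases "x = 0")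
      case True
      have "((\<lambda>y. r y / y) \<longlongrightarrow> 0) (at 0 within {0<..<1})"
        using rq_lim by (rule tendsto_within_subset) auto
      then have "((\<lambda>y. (r y - r 0) / (y - 0)) \<longlongrightarrow> 0) (at 0 within {0..1})"
        by (simp add: at0_within r00)
      then show ?thesis using True by (simp add: has_field_derivative_iff r'_def)
    next
      case False
      then have xI: "x \<in> {0<..1}" using x by auto
      show ?thesis using r_deriv_within[OF xI] False by (simp add: r'_def)
    qed
  qed
  show ?thesis unfolding C1_zero_at_0_def using c1 d1 by (intro exI[of _ r']) (simp add: r'_def)
qed

end


lemma at_within_01g: assumes "x \<in> {0<..1}" shows "at x within {0..1} = at x within {0<..(1::real)}"
  by (rule at_within_nhd[of x "{0<..<2}"]) (use assms in auto)

lemma zero_deriv_left: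
  fixes g :: "real \<Rightarrow> real"
  assumes der: "(g has_real_derivative L) (at x)" and x: "x > 0" and z: "\<forall>y\<in>{0<..x}. g y = 0"
  shows "L = 0"
proof (rule ccontr)
  assume "L \<noteq> 0"
  then consider "L > 0" | "L < 0" by linarith
  then show False
  proof cases
    case 1
    then obtain e where e: "e > 0" "\<forall>h>0. h < e \<longrightarrow> g (x - h) < g x"
      using DERIV_pos_inc_left[OF der] by blast
    define hh where "hh = min e x / 2"
    have hh: "hh > 0" "hh < e" "x - hh \<in> {0<..x}" using e x by (auto simp: hh_def)
    have "g (x - hh) < g x" using e hh by blast
    moreover have "g (x - hh) = 0" using z hh by blast
    moreover have "g x = 0" using z x by simp
    ultimately show False by simp
  next
    case 2
    then obtain e where e: "e > 0" "\<forall>h>0. h < e \<longrightarrow> g x < g (x - h)"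
      using DERIV_neg_dec_left[OF der] by blast
    define hh where "hh = min e x / 2"
    have hh: "hh > 0" "hh < e" "x - hh \<in> {0<..x}" using e x by (auto simp: hh_def)
    have "g x < g (x - hh)" using e hh by blast
    moreover have "g (x - hh) = 0" using z hh by blast
    moreover have "g x = 0" using z x by simp
    ultimately show False by simp
  qed
qed

context sol begin

lemma delayed_zero: assumes d: "0 < \<delta>" "\<delta> < 1" "\<forall>R\<in>{0..\<delta>}. r R = 0"
  shows "\<forall>x\<in>{0<..\<delta>}. Dr n x = 0"
proof (induction n)
  case 0
  show ?case
  proof
    fix x assume x: "x \<in> {0<..\<delta>}"
    then have "x \<in> {0<..1}" "x \<in> {0..\<delta>}" using d by auto
    then show "Dr 0 x = 0" using d(3) Dr0 by simp
  qed
next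
  case (Suc n)
  show ?case
  proof
    fix x assume x: "x \<in> {0<..\<delta>}"
    then have xI: "x \<in> {0<..<1}" using d by auto
    have der: "(Dr n has_real_derivative Dr (Suc n) x) (at x)" by (rule Dr_at[OF xI])
    have z: "\<forall>y\<in>{0<..x}. Dr n y = 0"
    proof
      fix y assume "y \<in> {0<..x}"
      then have "y \<in> {0<..\<delta>}" using x by auto
      then show "Dr n y = 0" using Suc.IH by blast
    qed
    show "Dr (Suc n) x = 0"
      by (rule zero_deriv_left[OF der _ z]) (use x in simp)
  qed
qed

lemma delayed_smooth: assumes d: "0 < \<delta>" "\<delta> < 1" "\<forall>R\<in>{0..\<delta>}. r R = 0"
  shows "smooth_on {0..1} r"
proof -
  define D' where "D' n x = (if x \<le> 0 then 0 else Dr n x)" for n x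
  have z: "D' n y = 0" if "y \<le> \<delta>" for n y
  proof (cases "y \<le> 0")
    case True then show ?thesis by (simp add: D'_def)
  next
    case False
    then have "y \<in> {0<..\<delta>}" using that by simp
    then show ?thesis using delayed_zero[OF d, of n] False by (simp add: D'_def)
  qed
  have a: "\<forall>x\<in>{0..1}. D' 0 x = r x"
  proof
    fix x :: real assume x: "x \<in> {0..1}"
    show "D' 0 x = r x"
    proof (cases "x \<le> 0")
      case True then show ?thesis using x r00 by (simp add: D'_def)
    next
      case False then show ?thesis using x Dr0 by (simp add: D'_def)
    qed
  qed
  have b: "\<forall>n. \<forall>x\<in>{0..1}. (D' n has_real_derivative D' (Suc n) x) (at x within {0..1})"
  proof (intro allI ballI)
    fix n x assume x: "x \<in> {0..1::real}"
    show "(D' n has_real_derivative D' (Suc n) x) (at x within {0..1})"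
    proof (cases "x = 0")
      case True
      have "((\<lambda>_. 0) has_real_derivative 0) (at 0 within {0..1})" by (rule DERIV_const)
      then have "(D' n has_real_derivative 0) (at 0 within {0..1})"
      proof (rule has_field_derivative_transform_within[where d=\<delta>])
        fix y :: real assume "y \<in> {0..1}" "dist y 0 < \<delta>"
        then have "y \<le> \<delta>" by (simp add: dist_real_def)
        then show "0 = D' n y" using z by simp
      qed (use d in auto)
      then show ?thesis using True by (simp add: D'_def)
    next
      case False
      then have xI: "x \<in> {0<..1}" using x by auto
      have "(D' n has_real_derivative Dr (Suc n) x) (at x within {0<..1})"
      proof (rule has_field_derivative_transform_within[OF Dr_within[OF xI], where d=1])
        fix y :: real assume "y \<in> {0<..1}"
        then show "Dr n y = D' n y" by (simp add: D'_def)
      qed (use xI in auto)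
      then show ?thesis using xI at_within_01g[OF xI] by (simp add: D'_def)
    qed
  qed
  show ?thesis unfolding smooth_on_def by (rule exI[of _ D'], rule conjI[OF a b])
qed

lemma delayed_dlim: assumes d: "0 < \<delta>" "\<delta> < 1" "\<forall>R\<in>{0..\<delta>}. r R = 0"
  shows "(dfun M r \<longlongrightarrow> 0) (at_right 0)"
proof -
  have ev: "eventually (\<lambda>x. 0 = dfun M r x) (at_right 0)"
    unfolding eventually_at_right_field
  proof (intro exI[of _ \<delta>] conjI allI impI)
    fix y :: real assume "0 < y" "y < \<delta>"
    then have "r y = 0" using d(3) by simp
    then show "0 = dfun M r y" by (simp add: dfun_def)
  qed (use d in simp)
  have c0: "((\<lambda>x. 0::real) \<longlongrightarrow> 0) (at_right 0)" by simp
  show ?thesis using iffD1[OF tendsto_cong[OF ev] c0] .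
qed

end

theorem lemma2p6:
  fixes \<gamma> s0 \<kappa> :: real and \<rho> :: "real \<Rightarrow> real" and M :: nat and r :: "real \<Rightarrow> real"
  assumes "\<gamma> > 0" and "s0 \<ge> 0" and "\<kappa> \<ge> - \<gamma> * s0"
    and "smooth_on UNIV \<rho>" and "convex_on UNIV \<rho>"
    and "\<forall>s\<le>0. \<rho> s = 0" and "\<forall>s\<ge>s0. \<rho> s = \<gamma> * s + \<kappa>"
    and "M \<ge> 2"
    and "strong_solution \<rho> M r"
  shows "(dfun M r \<longlongrightarrow> 0) (at_right 0) \<and>
    ((\<exists>\<delta>. 0 < \<delta> \<and> \<delta> < 1 \<and> (\<forall>R\<in>{0..\<delta>}. r R = 0)) \<longleftrightarrow>
       \<not> (\<forall>R\<in>{0<..1}. r R > 0 \<and> (\<exists>D>0. (r has_real_derivative D) (at R within {0..1})))) \<and>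
    ((\<exists>\<delta>. 0 < \<delta> \<and> \<delta> < 1 \<and> (\<forall>R\<in>{0..\<delta>}. r R = 0)) \<longrightarrow> smooth_on {0..1} r) \<and>
    ((\<forall>R\<in>{0<..1}. r R > 0 \<and> (\<exists>D>0. (r has_real_derivative D) (at R within {0..1})))
       \<longrightarrow> C1_zero_at_0 r)"
proof -
  obtain Dp where Dp: "\<forall>x\<in>UNIV. Dp 0 x = \<rho> x"
      "\<forall>n. \<forall>x\<in>UNIV. (Dp n has_real_derivative Dp (Suc n) x) (at x within UNIV)"
    using assms(4) unfolding smooth_on_def by blast
  obtain Dr where Dr: "\<forall>x\<in>{0<..1}. Dr 0 x = r x"
      "\<forall>n. \<forall>x\<in>{0<..1}. (Dr n has_real_derivative Dr (Suc n) x) (at x within {0<..1})"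
    using assms(9) unfolding strong_solution_def smooth_on_def by blast
  have ss: "continuous_on {0..1} r"
    "\<forall>R\<in>{0<..<1}. Lop M r R = real M * deriv (deriv \<rho>) (dfun M r R) * deriv (dfun M r) R * r R"
    "r 0 = 0" "r 1 = 1"
    using assms(9) unfolding strong_solution_def by blast+
  have Dp': "\<forall>x. Dp 0 x = \<rho> x" "\<forall>n x. (Dp n has_real_derivative Dp (Suc n) x) (at x)"
    using Dp by simp_all
  interpret sol \<rho> M r Dr Dp
  proof (unfold_locales)
    show "2 \<le> M" by (rule assms(8))
    show "\<forall>s\<le>0. \<rho> s = 0" by (rule assms(6))
    show "convex_on UNIV \<rho>" by (rule assms(5))
  qed (fact Dp' Dr ss)+
  let ?del = "\<exists>\<delta>. 0 < \<delta> \<and> \<delta> < 1 \<and> (\<forall>R\<in>{0..\<delta>}. r R = 0)"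
  let ?ii = "\<forall>R\<in>{0<..1}. r R > 0 \<and> (\<exists>D>0. (r has_real_derivative D) (at R within {0..1}))"
  show ?thesis
  proof (cases ?del)
    case True
    then obtain \<delta> where d: "0 < \<delta>" "\<delta> < 1" "\<forall>R\<in>{0..\<delta>}. r R = 0" by blast
    have nii: "\<not> ?ii"
    proof
      assume h: ?ii
      have "\<delta> \<in> {0<..1}" using d by auto
      then have "r \<delta> > 0" using h by blast
      moreover have "r \<delta> = 0" using d by auto
      ultimately show False by simp
    qed
    have sm: "smooth_on {0..1} r" by (rule delayed_smooth[OF d])
    have dl: "(dfun M r \<longlongrightarrow> 0) (at_right 0)" by (rule delayed_dlim[OF d])
    show ?thesis
    proof (intro conjI impI)
      show "(dfun M r \<longlongrightarrow> 0) (at_right 0)" by (rule dl)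
      show "?del = (\<not> ?ii)" using True nii by simp
      show "smooth_on {0..1} r" by (rule sm)
      show "C1_zero_at_0 r" if ?ii using that nii by simp
    qed
  next
    case False
    have rpos: "\<forall>x\<in>{0<..1}. r x > 0"
    proof
      fix x :: real assume x: "x \<in> {0<..1}"
      show "r x > 0"
      proof (cases "x = 1")
        case True then show ?thesis using r11 by simp
      next
        case False
        then have xI: "x \<in> {0<..<1}" using x by auto
        have "r x \<ge> 0" using r_nonneg xI by auto
        moreover have "r x \<noteq> 0"
        proof
          assume "r x = 0"
          then have "\<forall>R\<in>{0..x}. r R = 0" using r_zero_delayed[OF xI] by blast
          then show False using \<open>\<not> ?del\<close> xI by auto
        qed
        ultimately show ?thesis by simp
      qed
    qed
    interpret sol2 \<rho> M r Dr Dp by unfold_locales (rule rpos)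
    show ?thesis
    proof (intro conjI impI)
      show "(dfun M r \<longlongrightarrow> 0) (at_right 0)" by (rule dfun_lim)
      show "?del = (\<not> ?ii)" using False caseii by simp
      show "smooth_on {0..1} r" if ?del using that False by simp
      show "C1_zero_at_0 r" by (rule C1)
    qed
  qed
qed



end
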